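(* Let $\nu\in\mathbb{C}$, $k\in\mathbb{N}$, $\epsilon\in\{\pm1\}$, $E_0=-1/(2\epsilon\nu+2k+1)^2$, and $Y(z)=z^{\epsilon\nu+1/2}e^{-\frac{z}{2\epsilon\nu+2k+1}}\,{}_1F_1\!\left(-k,2\epsilon\nu+1,\frac{2z}{2\epsilon\nu+2k+1}\right)$. If there exists $M\in\mathbb{C}(z,E)$, regular at $E=E_0$, with $M(z,E_0)=-Y'(z)/Y(z)$ and $$H(z,E):=4M^2z^2+4z^2E-4M'z^2-4\nu^2+4z+1=O((E-E_0)^2)\quad(E\to E_0),$$ then $2\epsilon\nu+k\in\mathbb{N}$.
   Context: $'$ denotes $\partial/\partial z$. $H$ is the expression under the square root in the eigenfunction form $\psi=z\left(\frac{M}{\sqrt{-4E}}\mathcal{W}((-4E)^{-1/2},\nu,z\sqrt{-4E})+\mathcal{W}'((-4E)^{-1/2},\nu,z\sqrt{-4E})\right)/\sqrt H$, with $\mathcal W(\mu,\nu,z)$ a solution of $y''+\left(-\frac14+\frac{\mu}{z}+\frac{1/4-\nu^2}{z^2}\right)y=0$. $Y$ solves $4z^2Y''+(4E_0z^2+4z-4\nu^2+1)Y=0$. *)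

theory Defs
  imports "HOL-Analysis.Analysis" "HOL-Computational_Algebra.Polynomial" "HOL-Library.Landau_Symbols"
begin

text \<open>Bivariate complex polynomials in (z, E), represented as polynomials in z whose
  coefficients are polynomials in E; bpoly p z E evaluates p at (z, E).\<close>
definition bpoly :: "complex poly poly \<Rightarrow> complex \<Rightarrow> complex \<Rightarrow> complex" where
  "bpoly p z E = poly (map_poly (\<lambda>c. poly c E) p) z"

text \<open>Terminating confluent hypergeometric function 1F1(-k, b, x) (all terms with j > k vanish).\<close>
definition hyp1F1_neg :: "nat \<Rightarrow> complex \<Rightarrow> complex \<Rightarrow> complex" where
  "hyp1F1_neg k b x =
     (\<Sum>j\<le>k. pochhammer (- of_nat k) j / pochhammer b j * x ^ j / fact j)"

definition E0 :: "complex \<Rightarrow> nat \<Rightarrow> complex \<Rightarrow> complex" where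
  "E0 \<nu> k \<epsilon> = - 1 / (2 * \<epsilon> * \<nu> + 2 * of_nat k + 1) ^ 2"

definition Yfun :: "complex \<Rightarrow> nat \<Rightarrow> complex \<Rightarrow> complex \<Rightarrow> complex" where
  "Yfun \<nu> k \<epsilon> z =
     z powr (\<epsilon> * \<nu> + 1 / 2) * exp (- z / (2 * \<epsilon> * \<nu> + 2 * of_nat k + 1)) *
     hyp1F1_neg k (2 * \<epsilon> * \<nu> + 1) (2 * z / (2 * \<epsilon> * \<nu> + 2 * of_nat k + 1))"

definition Hfun :: "complex \<Rightarrow> (complex \<Rightarrow> complex \<Rightarrow> complex) \<Rightarrow> complex \<Rightarrow> complex \<Rightarrow> complex" where
  "Hfun \<nu> M z E = 4 * (M z E)^2 * z^2 + 4 * z^2 * E - 4 * deriv (\<lambda>w. M w E) z * z^2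
                    - 4 * \<nu>^2 + 4 * z + 1"

end

theory Submission
  imports Defs "HOL-Computational_Algebra.Fundamental_Theorem_Algebra"
begin


lemma bigO_deriv_zero:
  fixes f :: "complex \<Rightarrow> complex"
  assumes d: "(f has_field_derivative f') (at x)"
    and o: "f \<in> O[at x](\<lambda>E. (E - x)^2)"
  shows "f' = 0"
proof -
  from o obtain C where C: "C > 0" and ev: "eventually (\<lambda>E. norm (f E) \<le> C * norm ((E - x)^2)) (at x)"
    by (elim landau_o.bigE) auto
  have lim0: "((\<lambda>E. C * norm (E - x)^2) \<longlongrightarrow> 0) (at x)"
  proof -
    have "((\<lambda>E. C * norm (E - x)^2) \<longlongrightarrow> C * norm (x - x)^2) (at x)"
      by (intro tendsto_intros)
    then show ?thesis by simp
  qed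
  have "(f \<longlongrightarrow> 0) (at x)"
    by (rule Lim_null_comparison[OF _ lim0]) (use ev in \<open>auto simp: norm_power\<close>)
  moreover have "(f \<longlongrightarrow> f x) (at x)"
    using DERIV_isCont[OF d] by (simp add: isCont_def)
  ultimately have fx: "f x = 0" using tendsto_unique[OF at_neq_bot] by blast
  have lim1: "((\<lambda>E. C * norm (E - x)) \<longlongrightarrow> 0) (at x)"
  proof -
    have "((\<lambda>E. C * norm (E - x)) \<longlongrightarrow> C * norm (x - x)) (at x)"
      by (intro tendsto_intros)
    then show ?thesis by simp
  qed
  have neq: "eventually (\<lambda>E. E \<noteq> x) (at x)" by (simp add: eventually_at_filter)
  have ev2: "eventually (\<lambda>E. norm ((f E - f x) / (E - x)) \<le> C * norm (E - x)) (at x)"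
    using ev neq
  proof (eventually_elim)
    case (elim E)
    then have "norm (E - x) > 0" by simp
    then have "norm (f E) / norm (E - x) \<le> C * norm (E - x)^2 / norm (E - x)"
      using elim by (simp add: norm_power divide_right_mono)
    also have "\<dots> = C * norm (E - x)" by (simp add: power2_eq_square)
    finally show ?case using fx by (simp add: norm_divide)
  qed
  have "((\<lambda>E. (f E - f x) / (E - x)) \<longlongrightarrow> 0) (at x)"
    by (rule Lim_null_comparison[OF ev2 lim1])
  moreover have "((\<lambda>E. (f E - f x) / (E - x)) \<longlongrightarrow> f') (at x)"
    using d by (simp add: has_field_derivative_iff)
  ultimately show "f' = 0" using tendsto_unique[OF at_neq_bot] by blast
qed


lemma poly_sum_upto:
  fixes p :: "'a::comm_semiring_1 poly"
  assumes "degree p \<le> n"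
  shows "poly p x = (\<Sum>i\<le>n. coeff p i * x ^ i)"
proof -
  have "poly p x = (\<Sum>i\<le>degree p. coeff p i * x ^ i)" by (rule poly_altdef)
  also have "\<dots> = (\<Sum>i\<le>n. coeff p i * x ^ i)"
    by (rule sum.mono_neutral_left) (use assms in \<open>auto simp: coeff_eq_0\<close>)
  finally show ?thesis .
qed

lemma degree_map_poly_le:
  assumes "f 0 = 0" shows "degree (map_poly f p) \<le> degree p"
  by (rule degree_le) (simp add: coeff_map_poly assms coeff_eq_0)

lemma bpoly_sum: "bpoly R z E = (\<Sum>i\<le>degree R. poly (coeff R i) E * z ^ i)"
  unfolding bpoly_def
  by (subst poly_sum_upto[of _ "degree R"]) (auto simp: degree_map_poly_le coeff_map_poly)

lemma bpoly_dE_sum: "bpoly (map_poly pderiv R) z E = (\<Sum>i\<le>degree R. poly (pderiv (coeff R i)) E * z ^ i)"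
proof -
  have "degree (map_poly (\<lambda>c. poly c E) (map_poly pderiv R)) \<le> degree R"
    by (rule order.trans[OF degree_map_poly_le degree_map_poly_le]) auto
  then show ?thesis unfolding bpoly_def
    by (subst poly_sum_upto[of _ "degree R"]) (auto simp: coeff_map_poly)
qed

lemma bpoly_DERIV_E: "((\<lambda>E. bpoly R z E) has_field_derivative bpoly (map_poly pderiv R) z E) (at E)"
proof -
  have eq: "(\<lambda>E. bpoly R z E) = (\<lambda>E. \<Sum>i\<le>degree R. poly (coeff R i) E * z ^ i)"
    by (simp add: bpoly_sum)
  show ?thesis unfolding eq bpoly_dE_sum
    by (auto intro!: derivative_eq_intros)
qed

lemma pderiv_map_poly_eval:
  "pderiv (map_poly (\<lambda>c. poly c E) R) = map_poly (\<lambda>c. poly c E) (pderiv R)"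
  by (rule poly_eqI) (simp add: coeff_pderiv coeff_map_poly of_nat_poly)

lemma pderiv_map_poly_pderiv:
  "pderiv (map_poly pderiv R) = map_poly pderiv (pderiv (R :: 'a::{comm_ring_1,semiring_no_zero_divisors} poly poly))"
  by (rule poly_eqI) (simp add: coeff_pderiv coeff_map_poly of_nat_poly pderiv_smult)


definition lam :: "complex \<Rightarrow> complex \<Rightarrow> complex poly \<Rightarrow> complex" where
  "lam s c p = (\<Sum>j<Suc (degree p). coeff p j * pochhammer s j / c ^ j)"

lemma lam_upto:
  assumes "degree p < n"
  shows "lam s c p = (\<Sum>j<n. coeff p j * pochhammer s j / c ^ j)"
  unfolding lam_def
  by (rule sum.mono_neutral_left) (use assms in \<open>auto simp: coeff_eq_0\<close>)

lemma lam_add: "lam s c (p + q) = lam s c p + lam s c q"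
proof -
  define n where "n = Suc (max (degree p) (degree q))"
  have "degree (p + q) < n" unfolding n_def using degree_add_le_max[of p q] by linarith
  then show ?thesis
    by (simp add: lam_upto[where n=n] n_def sum.distrib[symmetric] ring_distribs add_divide_distrib)
qed

lemma lam_smult: "lam s c (smult a p) = a * lam s c p"
proof -
  have "degree (smult a p) < Suc (degree p)" using degree_smult_le[of a p] by linarith
  then show ?thesis
    by (simp only: lam_upto[where n="Suc (degree p)"] lam_def sum_distrib_left coeff_smult) (simp add: mult_ac)
qed

lemma lam_0 [simp]: "lam s c 0 = 0" by (simp add: lam_def)

lemma lam_uminus: "lam s c (- p) = - lam s c p"
  using lam_smult[of s c "-1" p] by simp

lemma lam_diff: "lam s c (p - q) = lam s c p - lam s c q"
  using lam_add[of s c p "-q"] lam_uminus[of s c q] by simp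

lemma lam_sum: "lam s c (\<Sum>i\<in>A. f i) = (\<Sum>i\<in>A. lam s c (f i))"
  by (induction A rule: infinite_finite_induct) (auto simp: lam_add)

lemma lam_1 [simp]: "lam s c 1 = 1" by (simp add: lam_def)

definition Tp :: "complex \<Rightarrow> complex \<Rightarrow> complex poly \<Rightarrow> complex poly" where
  "Tp s c G = pCons 0 (pderiv G) + smult s G - smult c (pCons 0 G)"

lemma coeff_Tp:
  "coeff (Tp s c G) j = (of_nat j + s) * coeff G j - (case j of 0 \<Rightarrow> 0 | Suc i \<Rightarrow> c * coeff G i)"
  by (cases j) (auto simp: Tp_def coeff_pderiv algebra_simps)

lemma lam_Tp:
  assumes c: "c \<noteq> 0"
  shows "lam s c (Tp s c G) = 0"
proof -
  define m where "m = Suc (degree G)"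
  have deg: "degree (Tp s c G) < Suc m"
  proof -
    have "coeff (Tp s c G) j = 0" if "j > m" for j
      using that by (cases j) (auto simp: coeff_Tp m_def coeff_eq_0)
    then have "degree (Tp s c G) \<le> m" by (intro degree_le) auto
    then show ?thesis by simp
  qed
  define F where "F j = coeff G j * pochhammer s (Suc j) / c ^ j" for j
  have "lam s c (Tp s c G) = (\<Sum>j<Suc m. coeff (Tp s c G) j * pochhammer s j / c ^ j)"
    by (rule lam_upto[OF deg])
  also have "\<dots> = coeff (Tp s c G) 0 * pochhammer s 0 / c ^ 0 +
      (\<Sum>j<m. coeff (Tp s c G) (Suc j) * pochhammer s (Suc j) / c ^ Suc j)"
    by (subst sum.lessThan_Suc_shift) simp
  also have "(\<Sum>j<m. coeff (Tp s c G) (Suc j) * pochhammer s (Suc j) / c ^ Suc j) =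
      (\<Sum>j<m. F (Suc j) - F j)"
  proof (rule sum.cong[OF refl])
    fix j
    have p2: "pochhammer s (Suc (Suc j)) = (s + of_nat (Suc j)) * pochhammer s (Suc j)"
      by (rule pochhammer_rec')
    show "coeff (Tp s c G) (Suc j) * pochhammer s (Suc j) / c ^ Suc j = F (Suc j) - F j"
      unfolding F_def coeff_Tp p2 using c
      by (simp add: field_simps)
  qed
  also have "\<dots> = F m - F 0" by (rule sum_lessThan_telescope)
  also have "F m = 0" by (simp add: F_def m_def coeff_eq_0)
  finally show ?thesis by (simp add: F_def coeff_Tp)
qed

lemma lam_pCons0:
  assumes c: "c \<noteq> 0"
  shows "lam s c (pCons 0 f) = s / c * lam (s + 1) c f"
proof -
  define m where "m = Suc (degree f)"
  have deg: "degree (pCons 0 f) < Suc m" unfolding m_def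
    by (metis degree_pCons_le le_imp_less_Suc)
  have "lam s c (pCons 0 f) = (\<Sum>j<Suc m. coeff (pCons 0 f) j * pochhammer s j / c ^ j)"
    by (rule lam_upto[OF deg])
  also have "\<dots> = (\<Sum>j<m. coeff f j * pochhammer s (Suc j) / c ^ Suc j)"
    by (subst sum.lessThan_Suc_shift) simp
  also have "\<dots> = s / c * (\<Sum>j<m. coeff f j * pochhammer (s + 1) j / c ^ j)"
    by (simp add: sum_distrib_left pochhammer_rec field_simps)
  also have "(\<Sum>j<m. coeff f j * pochhammer (s + 1) j / c ^ j) = lam (s+1) c f"
    by (simp add: lam_def m_def)
  finally show ?thesis .
qed

lemma Tp_prod: "Tp s c (u * pderiv v) = pCons 0 (pderiv u * pderiv v) + u * Tp s c (pderiv v)"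
  by (simp add: Tp_def pderiv_mult algebra_simps smult_add_right)

lemma lam_key:
  assumes "c \<noteq> 0"
  shows "lam s c (pCons 0 (pderiv u * pderiv v)) = - lam s c (u * Tp s c (pderiv v))"
  using lam_Tp[OF assms, of s "u * pderiv v"] unfolding Tp_prod lam_add by (simp add: eq_neg_iff_add_eq_0)


definition lc :: "nat \<Rightarrow> complex \<Rightarrow> nat \<Rightarrow> complex" where
  "lc k s j = pochhammer (- of_nat k) j / (pochhammer s j * fact j)"

definition Lp :: "nat \<Rightarrow> complex \<Rightarrow> complex \<Rightarrow> complex poly" where
  "Lp k s c = (\<Sum>j\<le>k. monom (lc k s j * c ^ j) j)"

lemma lc_zero: "j > k \<Longrightarrow> lc k s j = 0"
  by (auto simp: lc_def pochhammer_eq_0_iff)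

lemma lc_0 [simp]: "lc k s 0 = 1" by (simp add: lc_def)

lemma coeff_Lp: "coeff (Lp k s c) n = lc k s n * c ^ n"
  by (auto simp: Lp_def coeff_sum lc_zero)

lemma degree_Lp: "degree (Lp k s c) \<le> k"
  by (rule degree_le) (simp add: coeff_Lp lc_zero)

lemma lc_rec:
  assumes "n < k \<Longrightarrow> s + of_nat n \<noteq> 0"
  shows "(s + of_nat n) * (of_nat n + 1) * lc k s (Suc n) = (of_nat n - of_nat k) * lc k s n"
proof (cases "n < k")
  case True
  then have sn: "s + of_nat n \<noteq> 0" using assms by auto
  show ?thesis
  proof (cases "pochhammer s n = 0")
    case True
    then have "pochhammer s (Suc n) = 0" by (simp add: pochhammer_rec')
    then show ?thesis using True by (simp add: lc_def)
  next
    case False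
    have n1: "(of_nat n + 1 :: complex) \<noteq> 0" by (metis of_nat_Suc of_nat_eq_0_iff nat.distinct(1) add.commute)
    have fn: "(fact n :: complex) \<noteq> 0" by simp
    have eq: "lc k s (Suc n) = pochhammer (- of_nat k) n * (- of_nat k + of_nat n) /
       ((s + of_nat n) * pochhammer s n * ((of_nat n + 1) * fact n))"
      by (simp add: lc_def pochhammer_rec' algebra_simps)
    have aux: "\<And>a b X B F. (a::complex) \<noteq> 0 \<Longrightarrow> b \<noteq> 0 \<Longrightarrow> a * b * (X / (a * B * (b * F))) = X / (B * F)"
      by (simp add: field_simps)
    show ?thesis unfolding eq lc_def[of k s n] aux[OF sn n1]
      by (simp add: algebra_simps)
  qed
next
  case False
  then show ?thesis
    by (cases "n = k") (auto simp: lc_zero)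
qed

lemma Lp_ode:
  assumes "\<forall>j<k. s + of_nat j \<noteq> 0"
  shows "Tp s c (pderiv (Lp k s c)) = smult (- (c * of_nat k)) (Lp k s c)"
proof (rule poly_eqI)
  fix n
  have r: "(s + of_nat n) * (of_nat n + 1) * lc k s (Suc n) = (of_nat n - of_nat k) * lc k s n"
    by (rule lc_rec) (use assms in auto)
  show "coeff (Tp s c (pderiv (Lp k s c))) n = coeff (smult (- (c * of_nat k)) (Lp k s c)) n"
  proof (cases n)
    case 0
    then show ?thesis using r by (simp add: coeff_Tp coeff_pderiv coeff_Lp algebra_simps)
  next
    case (Suc i)
    have r2: "(s + of_nat (Suc i)) * (of_nat (Suc i) + 1) * lc k s (Suc (Suc i)) = (of_nat (Suc i) - of_nat k) * lc k s (Suc i)"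
      using r Suc by simp
    have "coeff (Tp s c (pderiv (Lp k s c))) (Suc i) =
       (s + of_nat (Suc i)) * (of_nat (Suc i) + 1) * lc k s (Suc (Suc i)) * c^(Suc (Suc i))
       - c * (of_nat (Suc i) * lc k s (Suc i) * c^(Suc i))"
      by (simp add: coeff_Tp coeff_pderiv coeff_Lp algebra_simps)
    also have "\<dots> = (of_nat (Suc i) - of_nat k) * lc k s (Suc i) * c^(Suc (Suc i))
       - c * (of_nat (Suc i) * lc k s (Suc i) * c^(Suc i))"
      by (simp only: r2)
    also have "\<dots> = coeff (smult (- (c * of_nat k)) (Lp k s c)) (Suc i)"
      by (simp add: coeff_Lp algebra_simps)
    finally show ?thesis unfolding Suc .
  qed
qed

lemma Lp_deriv:
  assumes "k = Suc m"
  shows "pderiv (Lp k s c) = smult (- (of_nat k * c / s)) (Lp m (s + 1) c)"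
proof (rule poly_eqI)
  fix n
  have km: "- of_nat k + 1 = - (of_nat m :: complex)" using assms by simp
  have pk: "pochhammer (- of_nat k :: complex) (Suc n) = (- of_nat k) * pochhammer (- of_nat m) n"
  proof -
    have "pochhammer (- of_nat k :: complex) (Suc n) = (- of_nat k) * pochhammer (- of_nat k + 1) n"
      by (rule pochhammer_rec)
    also have "\<dots> = (- of_nat k) * pochhammer (- of_nat m) n" by (simp only: km)
    finally show ?thesis .
  qed
  have ps: "pochhammer s (Suc n) = s * pochhammer (s + 1) n" by (rule pochhammer_rec)
  have n1: "(of_nat (Suc n) :: complex) \<noteq> 0" by (metis of_nat_eq_0_iff nat.distinct(1))
  have aux: "\<And>b X Y F. (b::complex) \<noteq> 0 \<Longrightarrow> b * (X / (Y * (b * F))) = X / (Y * F)"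
    by (simp add: field_simps)
  have "coeff (pderiv (Lp k s c)) n = of_nat (Suc n) * ((- of_nat k) * pochhammer (- of_nat m) n /
     ((s * pochhammer (s + 1) n) * (of_nat (Suc n) * fact n))) * c ^ Suc n"
    by (simp only: coeff_pderiv coeff_Lp lc_def pk ps fact_Suc mult.assoc)
  also have "\<dots> = (- of_nat k) * pochhammer (- of_nat m) n / ((s * pochhammer (s + 1) n) * fact n) * c ^ Suc n"
    by (simp only: aux[OF n1])
  also have "\<dots> = coeff (smult (- (of_nat k * c / s)) (Lp m (s + 1) c)) n"
    by (simp add: coeff_Lp lc_def mult_ac)
  finally show "coeff (pderiv (Lp k s c)) n = coeff (smult (- (of_nat k * c / s)) (Lp m (s + 1) c)) n" .
qed


lemma Lp_0: "Lp 0 s c = 1"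
  by (simp add: Lp_def monom_0)

lemma B_nz:
  assumes "c \<noteq> 0" "\<forall>j<k. s + of_nat j \<noteq> 0"
  shows "lam s c (Lp k s c * Lp k s c) \<noteq> 0"
  using assms(2)
proof (induction k arbitrary: s)
  case 0
  then show ?case by (simp add: Lp_0)
next
  case (Suc m)
  define L where "L = Lp (Suc m) s c"
  define L1 where "L1 = Lp m (s + 1) c"
  define \<alpha> where "\<alpha> = - (of_nat (Suc m) * c / s)"
  have s0: "s \<noteq> 0" using Suc.prems by force
  have IH: "lam (s + 1) c (L1 * L1) \<noteq> 0"
    unfolding L1_def
    by (rule Suc.IH) (use Suc.prems in \<open>auto simp: add.assoc\<close>)
  have ode: "Tp s c (pderiv L) = smult (- (c * of_nat (Suc m))) L"
    unfolding L_def by (rule Lp_ode[OF Suc.prems])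
  have der: "pderiv L = smult \<alpha> L1" unfolding L_def L1_def \<alpha>_def by (rule Lp_deriv) simp
  have "lam s c (pCons 0 (pderiv L * pderiv L)) = - lam s c (L * Tp s c (pderiv L))"
    by (rule lam_key[OF assms(1)])
  also have "\<dots> = c * of_nat (Suc m) * lam s c (L * L)"
    unfolding ode by (simp add: lam_smult lam_uminus)
  finally have e1: "lam s c (pCons 0 (pderiv L * pderiv L)) = c * of_nat (Suc m) * lam s c (L * L)" .
  have "lam s c (pCons 0 (pderiv L * pderiv L)) = s / c * (\<alpha> * \<alpha> * lam (s + 1) c (L1 * L1))"
    unfolding der by (simp add: lam_pCons0[OF assms(1)] lam_smult)
  moreover have "\<alpha> \<noteq> 0" using s0 assms(1) of_nat_neq_0[of m, where 'a=complex]
    by (simp add: \<alpha>_def del: of_nat_Suc)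
  ultimately have "lam s c (pCons 0 (pderiv L * pderiv L)) \<noteq> 0"
    using s0 assms(1) IH by simp
  then show ?case using e1 unfolding L_def by auto
qed

definition mu :: "nat \<Rightarrow> complex \<Rightarrow> complex \<Rightarrow> nat \<Rightarrow> complex" where
  "mu k s c d = lam s c (Lp k s c * monom 1 d)"

lemma lam_L_monom: "lam s c (Lp k s c * monom a d) = a * mu k s c d"
proof -
  have "monom a d = smult a (monom 1 d)" by (simp add: smult_monom)
  then show ?thesis by (simp add: mu_def lam_smult)
qed

lemma Tp_monom: "Tp s c (monom a e) = monom ((of_nat e + s) * a) e - monom (c * a) (Suc e)"
  by (rule poly_eqI) (auto simp: coeff_Tp coeff_monom split: nat.split)

lemma mu_rel:
  assumes c: "c \<noteq> 0" and k: "\<forall>j<k. s + of_nat j \<noteq> 0"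
  shows "c * of_nat k * mu k s c 0 = 0"
    and "c * of_nat k * mu k s c (Suc e) = - ((of_nat e + s) * of_nat (Suc e) * mu k s c e - c * of_nat (Suc e) * mu k s c (Suc e))"
proof -
  define L where "L = Lp k s c"
  have ode: "Tp s c (pderiv L) = smult (- (c * of_nat k)) L"
    unfolding L_def by (rule Lp_ode[OF k])
  have gen: "c * of_nat k * lam s c (u * L) = - lam s c (L * Tp s c (pderiv u))" for u
  proof -
    have "lam s c (pCons 0 (pderiv u * pderiv L)) = - lam s c (u * Tp s c (pderiv L))"
      by (rule lam_key[OF c])
    also have "\<dots> = c * of_nat k * lam s c (u * L)"
      unfolding ode by (simp add: lam_smult lam_uminus mult.commute)
    finally have 1: "lam s c (pCons 0 (pderiv u * pderiv L)) = c * of_nat k * lam s c (u * L)" .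
    have 2: "lam s c (pCons 0 (pderiv L * pderiv u)) = - lam s c (L * Tp s c (pderiv u))"
      by (rule lam_key[OF c])
    show ?thesis using 1 2 by (simp add: mult.commute)
  qed
  show "c * of_nat k * mu k s c 0 = 0"
    using gen[of "monom 1 0"] by (simp add: mu_def L_def mult.commute Tp_def)
  show "c * of_nat k * mu k s c (Suc e) = - ((of_nat e + s) * of_nat (Suc e) * mu k s c e - c * of_nat (Suc e) * mu k s c (Suc e))"
    using gen[of "monom 1 (Suc e)"]
    by (simp add: mu_def[symmetric] L_def mult.commute[of "monom 1 (Suc e)"] pderiv_monom Tp_monom
        ring_distribs lam_diff lam_L_monom del: of_nat_Suc)
qed

lemma mu_ortho:
  assumes c: "c \<noteq> 0" and k: "\<forall>j<k. s + of_nat j \<noteq> 0"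
  shows "d < k \<Longrightarrow> mu k s c d = 0"
proof (induction d)
  case 0
  then show ?case using mu_rel(1)[OF c k] c by simp
next
  case (Suc e)
  then have me: "mu k s c e = 0" by simp
  have r: "c * of_nat k * mu k s c (Suc e) = c * of_nat (Suc e) * mu k s c (Suc e)"
    using mu_rel(2)[OF c k, of e] me by simp
  have "of_nat k \<noteq> (of_nat (Suc e) :: complex)" using Suc.prems by (simp only: of_nat_eq_iff)
  then show ?case using r c by simp
qed

lemma mu_next:
  assumes c: "c \<noteq> 0" and k: "\<forall>j<k. s + of_nat j \<noteq> 0"
  shows "c * mu k s c (Suc k) = (of_nat k + s) * of_nat (Suc k) * mu k s c k"
  using mu_rel(2)[OF c k, of k] by (simp add: algebra_simps)

lemma pCons0_monom_mult: "pCons 0 p = monom 1 1 * (p :: complex poly)"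
  by (simp add: monom_Suc monom_0 smult_one)

lemma lam_LL: "lam s c (Lp k s c * Lp k s c) = (\<Sum>j\<le>k. lc k s j * c ^ j * mu k s c j)"
proof -
  have "Lp k s c * Lp k s c = (\<Sum>j\<le>k. Lp k s c * monom (lc k s j * c ^ j) j)"
    by (subst (2) Lp_def) (simp add: sum_distrib_left)
  then show ?thesis by (simp add: lam_sum lam_L_monom)
qed

lemma lam_zLL: "lam s c (pCons 0 (Lp k s c * Lp k s c)) = (\<Sum>j\<le>k. lc k s j * c ^ j * mu k s c (Suc j))"
proof -
  have e1: "pCons 0 (Lp k s c * Lp k s c) = Lp k s c * pCons 0 (Lp k s c)" by simp
  have e2: "pCons 0 (Lp k s c) = (\<Sum>j\<le>k. monom (lc k s j * c ^ j) (Suc j))"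
    unfolding Lp_def by (simp add: pCons0_monom_mult sum_distrib_left mult_monom)
  have "pCons 0 (Lp k s c * Lp k s c) = (\<Sum>j\<le>k. Lp k s c * monom (lc k s j * c ^ j) (Suc j))"
    unfolding e1 e2 by (simp add: sum_distrib_left)
  then show ?thesis by (simp add: lam_sum lam_L_monom)
qed

lemma lam_zL2_nz:
  assumes c: "c \<noteq> 0" and k: "\<forall>j<k. s + of_nat j \<noteq> 0" and s2: "s + 2 * of_nat k \<noteq> 0"
  shows "lam s c (pCons 0 (Lp k s c * Lp k s c)) \<noteq> 0"
proof (cases k)
  case 0
  then show ?thesis using c s2 by (simp add: Lp_0 lam_pCons0)
next
  case (Suc m)
  define X where "X = lc k s k"
  define M where "M = mu k s c k"
  have B: "lam s c (Lp k s c * Lp k s c) = X * c ^ k * M"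
  proof -
    have "lam s c (Lp k s c * Lp k s c) = (\<Sum>j<k. lc k s j * c ^ j * mu k s c j) + X * c ^ k * M"
      by (simp add: lam_LL X_def M_def lessThan_Suc_atMost[symmetric])
    also have "(\<Sum>j<k. lc k s j * c ^ j * mu k s c j) = 0"
      by (rule sum.neutral) (use mu_ortho[OF c k] in auto)
    finally show ?thesis by simp
  qed
  have XM: "X \<noteq> 0" "M \<noteq> 0" using B B_nz[OF c k] by auto
  have A: "lam s c (pCons 0 (Lp k s c * Lp k s c)) = lc k s m * c ^ m * M + X * c ^ k * mu k s c (Suc k)"
  proof -
    have "lam s c (pCons 0 (Lp k s c * Lp k s c)) =
       (\<Sum>j<m. lc k s j * c ^ j * mu k s c (Suc j)) + lc k s m * c ^ m * mu k s c (Suc m) + X * c ^ k * mu k s c (Suc k)"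
      by (simp add: lam_zLL X_def Suc lessThan_Suc_atMost[symmetric])
    also have "(\<Sum>j<m. lc k s j * c ^ j * mu k s c (Suc j)) = 0"
      by (rule sum.neutral) (use mu_ortho[OF c k] Suc in auto)
    finally show ?thesis by (simp add: M_def Suc)
  qed
  have lm: "lc k s m = - ((s + of_nat m) * (of_nat m + 1) * X)"
    using lc_rec[of m k s] k Suc by (simp add: X_def)
  have mn: "c * mu k s c (Suc k) = (of_nat k + s) * of_nat (Suc k) * M"
    using mu_next[OF c k] by (simp add: M_def)
  have "c * lam s c (pCons 0 (Lp k s c * Lp k s c)) = c * (lc k s m * c ^ m * M) + X * c ^ k * (c * mu k s c (Suc k))"
    unfolding A by (simp add: algebra_simps)
  also have "\<dots> = X * c ^ k * M * (s + 2 * of_nat k)"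
    unfolding lm mn by (simp add: Suc algebra_simps)
  finally have "c * lam s c (pCons 0 (Lp k s c * Lp k s c)) = X * c ^ k * M * (s + 2 * of_nat k)" .
  then show ?thesis using XM c s2 by auto
qed


definition Zp :: "complex \<Rightarrow> complex \<Rightarrow> complex poly \<Rightarrow> complex poly \<Rightarrow> complex poly \<Rightarrow> complex poly" where
  "Zp s c Lz N D = [:0,1:] * (pderiv N * D - N * pderiv D) + smult s (N * D)
      - smult c ([:0,1:] * (N * D)) - [:0,1:] * (Lz * Lz * D * D)"

lemma Zp_cancel: "Zp s c Lz (x * N) (x * D) = x * x * Zp s c Lz N D"
  by (simp add: Zp_def pderiv_mult algebra_simps)

lemma Zp_decomp:
  assumes "D = x ^ Suc r * D1" "pderiv x = 1"
  shows "Zp s c Lz N D = x ^ r * ([:0,1:] * (pderiv N * x * D1 - N * (smult (of_nat (Suc r)) D1 + x * pderiv D1))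
     + smult s (N * x * D1) - smult c ([:0,1:] * (N * x * D1)) - [:0,1:] * (Lz * Lz * x ^ Suc (Suc r) * D1 * D1))"
proof -
  have dD: "pderiv (x ^ Suc r * D1) = smult (of_nat (Suc r)) (x ^ r) * D1 + x ^ Suc r * pderiv D1"
    by (simp only: pderiv_mult pderiv_power_Suc assms(2)) (simp add: algebra_simps)
  show ?thesis unfolding assms(1) Zp_def dD
    by (simp add: algebra_simps power_Suc del: of_nat_Suc)
qed


lemma Zp_const: "Zp s c Lz N [:d:] = smult d (Tp s c N) - smult (d * d) (pCons 0 (Lz * Lz))"
  unfolding Zp_def Tp_def
  by (rule poly_eqI) (simp add: coeff_pCons algebra_simps split: nat.split)
lemma Tp_smult: "Tp s c (smult a G) = smult a (Tp s c G)"
  by (rule poly_eqI) (simp add: coeff_Tp algebra_simps split: nat.split)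
lemma aux_cancel:
  assumes "smult d T = smult (d * d) P" "d \<noteq> (0::complex)"
  shows "smult (1/d) T = P"
proof -
  have "smult (1/d) (smult d T) = smult (1/d) (smult (d*d) P)" using assms(1) by simp
  then show ?thesis using assms(2) by (simp add: field_simps)
qed

lemma root_forces_N:
  assumes Z: "Zp s c Lz N D = 0" and D0: "D \<noteq> 0" and rt: "poly D z0 = 0"
    and sn: "\<forall>n::nat. s \<noteq> of_nat (Suc n)"
  shows "poly N z0 = 0"
proof (rule ccontr)
  assume N0: "poly N z0 \<noteq> 0"
  define x where "x = [:- z0, 1:]"
  obtain D1 where D1: "D = x ^ order z0 D * D1" "\<not> x dvd D1"
    using order_decomp[OF D0, of z0] unfolding x_def by blast
  have "order z0 D \<noteq> 0" using rt D0 order_root by blast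
  then obtain r where r: "order z0 D = Suc r" by (cases "order z0 D") auto
  have D1z: "poly D1 z0 \<noteq> 0" using D1(2) poly_eq_0_iff_dvd unfolding x_def by blast
  have px: "pderiv x = 1" by (simp add: x_def pderiv_pCons)
  define W where "W = [:0,1:] * (pderiv N * x * D1 - N * (smult (of_nat (Suc r)) D1 + x * pderiv D1))
     + smult s (N * x * D1) - smult c ([:0,1:] * (N * x * D1)) - [:0,1:] * (Lz * Lz * x ^ Suc (Suc r) * D1 * D1)"
  have "Zp s c Lz N D = x ^ r * W"
    unfolding W_def by (rule Zp_decomp[OF _ px]) (use D1 r in simp)
  moreover have "x \<noteq> 0" by (simp add: x_def)
  ultimately have W0: "W = 0" using Z by simp
  have pxz: "poly x z0 = 0" by (simp add: x_def)
  show False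
  proof (cases "z0 = 0")
    case False
    have "poly W z0 = - (z0 * of_nat (Suc r) * poly N z0 * poly D1 z0)"
      unfolding W_def using pxz by (simp add: algebra_simps)
    then show False using W0 False N0 D1z by (simp del: of_nat_Suc)
  next
    case True
    then have xe: "x = [:0,1:]" by (simp add: x_def)
    define W2 where "W2 = (pderiv N * x * D1 - N * (smult (of_nat (Suc r)) D1 + x * pderiv D1))
      + smult s (N * D1) - smult c (N * x * D1) - Lz * Lz * x ^ Suc (Suc r) * D1 * D1"
    have "W = [:0,1:] * W2" unfolding W_def W2_def xe by (simp add: algebra_simps)
    then have "W2 = 0" using W0 by simp
    moreover have "poly W2 0 = (s - of_nat (Suc r)) * poly N 0 * poly D1 0"
      unfolding W2_def xe by (simp add: algebra_simps)
    ultimately show False using sn N0 D1z True by (simp del: of_nat_Suc)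
  qed
qed

lemma poly_sol:
  assumes "D \<noteq> 0" "Zp s c Lz N D = 0" "\<forall>n::nat. s \<noteq> of_nat (Suc n)"
  shows "\<exists>G. Tp s c G = pCons 0 (Lz * Lz)"
  using assms(1,2)
proof (induction "degree D" arbitrary: N D rule: less_induct)
  case less
  show ?case
  proof (cases "degree D = 0")
    case True
    then obtain d where d: "D = [:d:]" by (metis degree_eq_zeroE)
    with less.prems have d0: "d \<noteq> 0" by simp
    have "Zp s c Lz N D = smult d (Tp s c N) - smult (d * d) (pCons 0 (Lz * Lz))"
      unfolding d by (rule Zp_const)
    then have "smult d (Tp s c N) = smult (d * d) (pCons 0 (Lz * Lz))" using less.prems by simp
    then have "Tp s c (smult (1/d) N) = pCons 0 (Lz * Lz)"
      unfolding Tp_smult using d0 by (rule aux_cancel)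
    then show ?thesis by blast
  next
    case False
    then have "\<not> constant (poly D)" by (simp add: constant_degree)
    then obtain z0 where z0: "poly D z0 = 0" using fundamental_theorem_of_algebra by blast
    have "poly N z0 = 0" by (rule root_forces_N[OF less.prems(2,1) z0 assms(3)])
    then obtain N2 where N2: "N = [:-z0,1:] * N2" using poly_eq_0_iff_dvd by blast
    obtain D2 where D2: "D = [:-z0,1:] * D2" using z0 poly_eq_0_iff_dvd by blast
    have D20: "D2 \<noteq> 0" using less.prems D2 by auto
    have "[:-z0,1:] * [:-z0,1:] * Zp s c Lz N2 D2 = 0"
      using less.prems(2) unfolding N2 D2 Zp_cancel .
    moreover have "[:-z0,1:] \<noteq> (0::complex poly)" by simp
    ultimately have Z2: "Zp s c Lz N2 D2 = 0" by (metis mult_eq_0_iff)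
    have "degree D = Suc (degree D2)" unfolding D2 using D20 by (subst degree_mult_eq) auto
    then show ?thesis using less.hyps[OF _ D20 Z2] by simp
  qed
qed


lemma final_alg:
  fixes p q pe qe pw qw pwe qwe z l lw s a c :: complex
  assumes q: "q \<noteq> 0" and z: "z \<noteq> 0" and l: "l \<noteq> 0" and c: "c = 2 / a"
    and hX: "8 * (p / q) * ((pe * q - p * qe) / q^2) * z^2 + 4 * z^2
        - 4 * (((pwe * q + pw * qe - pe * qw - p * qwe) * q^2 - (pw * q - p * qw) * (2 * q * qe)) / q^4) * z^2 = 0"
    and hM: "p / q = - (s / (2 * z) - 1 / a + lw / l)"
  shows "z * (((pwe * q + pe * qw - pw * qe - p * qwe) * l^2 + 2 * (pe * q - p * qe) * l * lw) * q^2
        - (pe * q - p * qe) * l^2 * (2 * q * qw)) + s * ((pe * q - p * qe) * l^2 * q^2)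
        - c * z * ((pe * q - p * qe) * l^2 * q^2) - z * (l^2 * q^2 * q^2) = 0"
proof -
  define u where "u = pe * q - p * qe"
  define A where "A = (pwe * q + pw * qe - pe * qw - p * qwe) * q - 2 * (pw * q - p * qw) * qe"
  have hA: "A = 2 * p * u + q^3"
  proof -
    have "8 * (p / q) * ((pe * q - p * qe) / q^2) * z^2 + 4 * z^2
        - 4 * (((pwe * q + pw * qe - pe * qw - p * qwe) * q^2 - (pw * q - p * qw) * (2 * q * qe)) / q^4) * z^2
        = 4 * z^2 * (2 * p * u + q^3 - A) / q^3"
      using q unfolding u_def A_def by (simp add: field_simps) algebra
    then have "4 * z^2 * (2 * p * u + q^3 - A) / q^3 = 0" using hX by simp
    then show ?thesis using q z by simp
  qed
  have hB: "2 * z * l * p + 2 * z * lw * q + (s - c * z) * l * q = 0"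
  proof -
    have "p = - q * (s / (2 * z) - 1 / a + lw / l)" using hM q by (simp add: field_simps)
    then show ?thesis using z l unfolding c by (simp add: field_simps)
  qed
  have e: "(pwe * q + pe * qw - pw * qe - p * qwe) * q - 2 * u * qw = A"
    unfolding u_def A_def by (simp add: algebra_simps)
  have "z * (((pwe * q + pe * qw - pw * qe - p * qwe) * l^2 + 2 * (pe * q - p * qe) * l * lw) * q^2
        - (pe * q - p * qe) * l^2 * (2 * q * qw)) + s * ((pe * q - p * qe) * l^2 * q^2)
        - c * z * ((pe * q - p * qe) * l^2 * q^2) - z * (l^2 * q^2 * q^2)
      = z * l^2 * q * ((pwe * q + pe * qw - pw * qe - p * qwe) * q - 2 * u * qw - 2 * p * u - q^3)
        + u * l * q * (2 * z * l * p + 2 * z * lw * q + (s - c * z) * l * q)"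
    unfolding u_def by (simp add: algebra_simps power2_eq_square power3_eq_cube)
  also have "\<dots> = 0" unfolding e hA hB by simp
  finally show ?thesis .
qed


lemma hyp_poly:
  assumes "c = 2 / a"
  shows "hyp1F1_neg k s (2 * z / a) = poly (Lp k s c) z"
proof -
  have "poly (Lp k s c) z = (\<Sum>j\<le>k. lc k s j * c ^ j * z ^ j)"
    by (simp add: Lp_def poly_sum poly_monom)
  also have "\<dots> = hyp1F1_neg k s (2 * z / a)"
    unfolding hyp1F1_neg_def lc_def assms
    by (rule sum.cong) (simp_all add: power_mult_distrib power_divide mult_ac)
  finally show ?thesis by simp
qed

lemma Yfun_eq:
  fixes \<nu> \<epsilon> :: complex and k :: nat
  defines "a \<equiv> 2 * \<epsilon> * \<nu> + 2 * of_nat k + 1" and "s \<equiv> 2 * \<epsilon> * \<nu> + 1"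
  shows "Yfun \<nu> k \<epsilon> = (\<lambda>z. z powr (\<epsilon> * \<nu> + 1 / 2) * exp (- z / a) * poly (Lp k s (2 / a)) z)"
  unfolding Yfun_def a_def s_def
  by (rule ext) (simp add: hyp_poly[of "2 / (2 * \<epsilon> * \<nu> + 2 * of_nat k + 1)"])

lemma Y_deriv:
  fixes w a :: complex and L :: "complex poly"
  assumes z: "z \<notin> \<real>\<^sub>\<le>\<^sub>0" and a: "a \<noteq> 0"
  shows "((\<lambda>z. z powr w * exp (- z / a) * poly L z) has_field_derivative
     (z powr w * exp (- z / a) * poly L z) * (w / z - 1 / a) + z powr w * exp (- z / a) * poly (pderiv L) z) (at z)"
proof -
  have z0: "z \<noteq> 0" using z by auto
  have d1: "((\<lambda>z. z powr w) has_field_derivative w * z powr (w - 1)) (at z)"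
    by (rule has_field_derivative_powr[OF z])
  have d2: "((\<lambda>z. exp (- z / a)) has_field_derivative exp (- z / a) * (- 1 / a)) (at z)"
    using a by (auto intro!: derivative_eq_intros)
  have pw: "z powr (w - 1) = z powr w / z" using z0 by (simp add: powr_diff)
  show ?thesis
    by (rule DERIV_cong[OF DERIV_mult[OF DERIV_mult[OF d1 d2] poly_DERIV]])
       (simp add: pw algebra_simps)
qed


lemma bpoly_DERIV_E':
  "D = bpoly (map_poly pderiv R) z E \<Longrightarrow> ((\<lambda>E. bpoly R z E) has_field_derivative D) (at E within S)"
  using has_field_derivative_at_within[OF bpoly_DERIV_E] by simp

lemma M_deriv_w:
  assumes "bpoly Q z E \<noteq> 0"
  shows "deriv (\<lambda>w. bpoly P w E / bpoly Q w E) z =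
    (bpoly (pderiv P) z E * bpoly Q z E - bpoly P z E * bpoly (pderiv Q) z E) / (bpoly Q z E)^2"
proof -
  have "((\<lambda>w. bpoly P w E / bpoly Q w E) has_field_derivative
    (bpoly (pderiv P) z E * bpoly Q z E - bpoly P z E * bpoly (pderiv Q) z E) / (bpoly Q z E * bpoly Q z E)) (at z)"
    unfolding bpoly_def
    by (rule DERIV_cong[OF DERIV_divide[OF poly_DERIV poly_DERIV]])
       (use assms in \<open>simp_all add: bpoly_def pderiv_map_poly_eval\<close>)
  then show ?thesis by (simp add: DERIV_imp_deriv power2_eq_square)
qed

definition Ht :: "complex poly poly \<Rightarrow> complex poly poly \<Rightarrow> complex \<Rightarrow> complex \<Rightarrow> complex \<Rightarrow> complex" where
  "Ht P Q \<nu> z E = 4 * (bpoly P z E / bpoly Q z E)^2 * z^2 + 4 * z^2 * E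
     - 4 * ((bpoly (pderiv P) z E * bpoly Q z E - bpoly P z E * bpoly (pderiv Q) z E) / (bpoly Q z E)^2) * z^2
     - 4 * \<nu>^2 + 4 * z + 1"

lemma Hfun_Ht:
  assumes "bpoly Q z E \<noteq> 0"
  shows "Hfun \<nu> (\<lambda>w F. bpoly P w F / bpoly Q w F) z E = Ht P Q \<nu> z E"
  unfolding Hfun_def Ht_def M_deriv_w[OF assms] by simp

lemma ev_Q_ne:
  assumes "bpoly Q z e0 \<noteq> 0"
  shows "eventually (\<lambda>E. bpoly Q z E \<noteq> 0) (nhds e0)"
proof -
  have "((\<lambda>E. bpoly Q z E) \<longlongrightarrow> bpoly Q z e0) (at e0)"
    using DERIV_isCont[OF bpoly_DERIV_E] by (simp add: isCont_def)
  then have "eventually (\<lambda>E. bpoly Q z E \<noteq> 0) (at e0)"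
    using assms by (rule tendsto_imp_eventually_ne)
  then have "eventually (\<lambda>E. E \<noteq> e0 \<longrightarrow> bpoly Q z E \<noteq> 0) (nhds e0)"
    by (simp add: eventually_at_filter)
  then show ?thesis by eventually_elim (use assms in auto)
qed

lemma Ht_deriv:
  fixes P Q :: "complex poly poly" and z e0 :: complex
  defines "p \<equiv> bpoly P z e0" and "q \<equiv> bpoly Q z e0"
    and "pe \<equiv> bpoly (map_poly pderiv P) z e0" and "qe \<equiv> bpoly (map_poly pderiv Q) z e0"
    and "pw \<equiv> bpoly (pderiv P) z e0" and "qw \<equiv> bpoly (pderiv Q) z e0"
    and "pwe \<equiv> bpoly (map_poly pderiv (pderiv P)) z e0" and "qwe \<equiv> bpoly (map_poly pderiv (pderiv Q)) z e0"
  assumes q: "q \<noteq> 0"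
  shows "((\<lambda>E. Ht P Q \<nu> z E) has_field_derivative
    8 * (p / q) * ((pe * q - p * qe) / q^2) * z^2 + 4 * z^2
        - 4 * (((pwe * q + pw * qe - pe * qw - p * qwe) * q^2 - (pw * q - p * qw) * (2 * q * qe)) / q^4) * z^2) (at e0)"
proof -
  have dP: "((\<lambda>E. bpoly P z E) has_field_derivative pe) (at e0)" unfolding pe_def by (rule bpoly_DERIV_E)
  have dQ: "((\<lambda>E. bpoly Q z E) has_field_derivative qe) (at e0)" unfolding qe_def by (rule bpoly_DERIV_E)
  have dPw: "((\<lambda>E. bpoly (pderiv P) z E) has_field_derivative pwe) (at e0)" unfolding pwe_def by (rule bpoly_DERIV_E)
  have dQw: "((\<lambda>E. bpoly (pderiv Q) z E) has_field_derivative qwe) (at e0)" unfolding qwe_def by (rule bpoly_DERIV_E)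
  have df: "((\<lambda>E. bpoly P z E / bpoly Q z E) has_field_derivative (pe * q - p * qe) / (q * q)) (at e0)"
    using DERIV_divide[OF dP dQ] q unfolding p_def q_def by simp
  have df2: "((\<lambda>E. (bpoly P z E / bpoly Q z E)^2) has_field_derivative of_nat 2 * (((pe * q - p * qe) / (q * q)) * (p / q) ^ (2 - Suc 0))) (at e0)"
    using DERIV_power[OF df, of 2] unfolding p_def q_def by simp
  have dN: "((\<lambda>E. bpoly (pderiv P) z E * bpoly Q z E - bpoly P z E * bpoly (pderiv Q) z E) has_field_derivative
      (pwe * q + qe * pw) - (pe * qw + qwe * p)) (at e0)"
    using DERIV_diff[OF DERIV_mult[OF dPw dQ] DERIV_mult[OF dP dQw]] unfolding p_def q_def pw_def qw_def by simp
  have dD: "((\<lambda>E. (bpoly Q z E)^2) has_field_derivative of_nat 2 * (qe * q ^ (2 - Suc 0))) (at e0)"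
    using DERIV_power[OF dQ, of 2] unfolding q_def by simp
  have dg: "((\<lambda>E. (bpoly (pderiv P) z E * bpoly Q z E - bpoly P z E * bpoly (pderiv Q) z E) / (bpoly Q z E)^2) has_field_derivative
      (((pwe * q + qe * pw) - (pe * qw + qwe * p)) * q^2 - (pw * q - p * qw) * (of_nat 2 * (qe * q ^ (2 - Suc 0)))) / (q^2 * q^2)) (at e0)"
    using DERIV_divide[OF dN dD] q unfolding p_def q_def pw_def qw_def by simp
  have dE: "((\<lambda>E. 4 * z^2 * E) has_field_derivative 4 * z^2) (at e0)"
    by (auto intro!: derivative_eq_intros)
  have all: "((\<lambda>E. Ht P Q \<nu> z E) has_field_derivative
     4 * (of_nat 2 * (((pe * q - p * qe) / (q * q)) * (p / q) ^ (2 - Suc 0))) * z^2 + 4 * z^2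
     - 4 * ((((pwe * q + qe * pw) - (pe * qw + qwe * p)) * q^2 - (pw * q - p * qw) * (of_nat 2 * (qe * q ^ (2 - Suc 0)))) / (q^2 * q^2)) * z^2
     - 0 + 0 + 0) (at e0)"
    unfolding Ht_def
    by (intro DERIV_add DERIV_diff DERIV_const DERIV_cmult_right DERIV_cmult df2 dg dE)
  show ?thesis
    by (rule DERIV_cong[OF all]) (use q in \<open>simp add: field_simps power2_eq_square power4_eq_xxxx\<close>)
qed


lemma pointwise:
  fixes \<nu> \<epsilon> z :: complex and k :: nat and P Q :: "complex poly poly"
  defines "a \<equiv> 2 * \<epsilon> * \<nu> + 2 * of_nat k + 1" and "s \<equiv> 2 * \<epsilon> * \<nu> + 1"
    and "e0 \<equiv> E0 \<nu> k \<epsilon>"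
  defines "c \<equiv> 2 / a" and "ev \<equiv> \<lambda>R. map_poly (\<lambda>q. poly q e0) R"
  defines "L \<equiv> Lp k s c"
  defines "N \<equiv> (ev (map_poly pderiv P) * ev Q - ev P * ev (map_poly pderiv Q)) * L * L"
    and "D \<equiv> ev Q * ev Q"
  assumes a: "a \<noteq> 0" and z: "z \<notin> \<real>\<^sub>\<le>\<^sub>0" and l: "poly L z \<noteq> 0" and q: "bpoly Q z e0 \<noteq> 0"
    and hM: "bpoly P z e0 / bpoly Q z e0 = - deriv (Yfun \<nu> k \<epsilon>) z / Yfun \<nu> k \<epsilon> z"
    and hO: "(\<lambda>E. Hfun \<nu> (\<lambda>w F. bpoly P w F / bpoly Q w F) z E) \<in> O[at e0](\<lambda>E. (E - e0)^2)"
  shows "poly (Zp s c L N D) z = 0"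
proof -
  define w where "w = \<epsilon> * \<nu> + 1 / 2"
  have z0: "z \<noteq> 0" using z by auto
  have Yeq: "Yfun \<nu> k \<epsilon> = (\<lambda>z. z powr w * exp (- z / a) * poly L z)"
    unfolding w_def L_def c_def a_def s_def by (rule Yfun_eq)
  define Yz where "Yz = z powr w * exp (- z / a) * poly L z"
  have Yz0: "Yz \<noteq> 0" using z0 l by (simp add: Yz_def)
  have dY: "deriv (Yfun \<nu> k \<epsilon>) z = Yz * (w / z - 1 / a) + z powr w * exp (- z / a) * poly (pderiv L) z"
    unfolding Yeq Yz_def by (rule DERIV_imp_deriv[OF Y_deriv[OF z a]])
  have hM': "bpoly P z e0 / bpoly Q z e0 = - (s / (2 * z) - 1 / a + poly (pderiv L) z / poly L z)"
  proof -
    have "- deriv (Yfun \<nu> k \<epsilon>) z / Yfun \<nu> k \<epsilon> z = - ((w / z - 1 / a) + poly (pderiv L) z / poly L z)"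
      unfolding dY using Yz0 l unfolding Yeq Yz_def[symmetric] by (simp add: Yz_def field_simps)
    moreover have "w / z = s / (2 * z)" unfolding w_def s_def using z0 by (simp add: field_simps)
    ultimately show ?thesis using hM by simp
  qed
  have evh: "eventually (\<lambda>E. Hfun \<nu> (\<lambda>w F. bpoly P w F / bpoly Q w F) z E = Ht P Q \<nu> z E) (nhds e0)"
    using ev_Q_ne[OF q] by eventually_elim (rule Hfun_Ht)
  have dH: "((\<lambda>E. Hfun \<nu> (\<lambda>w F. bpoly P w F / bpoly Q w F) z E) has_field_derivative
    8 * (bpoly P z e0 / bpoly Q z e0) * ((bpoly (map_poly pderiv P) z e0 * bpoly Q z e0 - bpoly P z e0 * bpoly (map_poly pderiv Q) z e0) / (bpoly Q z e0)^2) * z^2 + 4 * z^2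
        - 4 * (((bpoly (map_poly pderiv (pderiv P)) z e0 * bpoly Q z e0 + bpoly (pderiv P) z e0 * bpoly (map_poly pderiv Q) z e0
           - bpoly (map_poly pderiv P) z e0 * bpoly (pderiv Q) z e0 - bpoly P z e0 * bpoly (map_poly pderiv (pderiv Q)) z e0) * (bpoly Q z e0)^2
           - (bpoly (pderiv P) z e0 * bpoly Q z e0 - bpoly P z e0 * bpoly (pderiv Q) z e0) * (2 * bpoly Q z e0 * bpoly (map_poly pderiv Q) z e0)) / (bpoly Q z e0)^4) * z^2) (at e0)"
    by (subst DERIV_cong_ev[OF refl evh refl]) (rule Ht_deriv[OF q])
  note X0 = bigO_deriv_zero[OF dH hO]
  note fa = final_alg[OF q z0 l c_def[THEN meta_eq_to_obj_eq] X0 hM']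
  have pe: "\<And>R. poly (ev R) z = bpoly R z e0" by (simp add: ev_def bpoly_def)
  have pd: "\<And>R. pderiv (ev R) = ev (pderiv R)" by (simp add: ev_def pderiv_map_poly_eval)
  have "poly (Zp s c L N D) z = z * (((bpoly (map_poly pderiv (pderiv P)) z e0 * bpoly Q z e0 + bpoly (map_poly pderiv P) z e0 * bpoly (pderiv Q) z e0
      - bpoly (pderiv P) z e0 * bpoly (map_poly pderiv Q) z e0 - bpoly P z e0 * bpoly (map_poly pderiv (pderiv Q)) z e0) * (poly L z)^2
      + 2 * (bpoly (map_poly pderiv P) z e0 * bpoly Q z e0 - bpoly P z e0 * bpoly (map_poly pderiv Q) z e0) * poly L z * poly (pderiv L) z) * (bpoly Q z e0)^2
      - (bpoly (map_poly pderiv P) z e0 * bpoly Q z e0 - bpoly P z e0 * bpoly (map_poly pderiv Q) z e0) * (poly L z)^2 * (2 * bpoly Q z e0 * bpoly (pderiv Q) z e0))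
      + s * ((bpoly (map_poly pderiv P) z e0 * bpoly Q z e0 - bpoly P z e0 * bpoly (map_poly pderiv Q) z e0) * (poly L z)^2 * (bpoly Q z e0)^2)
      - c * z * ((bpoly (map_poly pderiv P) z e0 * bpoly Q z e0 - bpoly P z e0 * bpoly (map_poly pderiv Q) z e0) * (poly L z)^2 * (bpoly Q z e0)^2)
      - z * ((poly L z)^2 * (bpoly Q z e0)^2 * (bpoly Q z e0)^2)"
    unfolding Zp_def N_def D_def
    by (simp add: pderiv_mult pderiv_diff pd pe pderiv_map_poly_pderiv) algebra
  then show ?thesis using fa by simp
qed


lemma exists_good_point:
  fixes F :: "complex set"
  assumes "finite F"
  shows "\<exists>n::nat. of_nat (Suc n) \<notin> F"
proof -
  have "inj (\<lambda>n::nat. (of_nat (Suc n) :: complex))" by (auto simp: inj_def)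
  then have "finite ((\<lambda>n::nat. (of_nat (Suc n) :: complex)) -` F)"
    using finite_vimageI[OF assms] by blast
  then have "(\<lambda>n::nat. (of_nat (Suc n) :: complex)) -` F \<noteq> UNIV" using infinite_UNIV_nat by auto
  then show ?thesis by auto
qed

lemma Lp_nz: "Lp k s c \<noteq> 0"
proof
  assume "Lp k s c = 0"
  then have "coeff (Lp k s c) 0 = 0" by simp
  then show False by (simp add: coeff_Lp)
qed

theorem mainTheorem14:
  fixes \<nu> \<epsilon> :: complex and k :: nat
  assumes "\<epsilon> \<in> {1, -1}"
    and "2 * \<epsilon> * \<nu> + 2 * of_nat k + 1 \<noteq> 0"
    and "\<exists>P Q :: complex poly poly.
           (\<exists>z. bpoly Q z (E0 \<nu> k \<epsilon>) \<noteq> 0) \<and>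
           (\<forall>z. z \<notin> \<real>\<^sub>\<le>\<^sub>0 \<and> Yfun \<nu> k \<epsilon> z \<noteq> 0 \<and> bpoly Q z (E0 \<nu> k \<epsilon>) \<noteq> 0 \<longrightarrow>
                bpoly P z (E0 \<nu> k \<epsilon>) / bpoly Q z (E0 \<nu> k \<epsilon>)
                  = - deriv (Yfun \<nu> k \<epsilon>) z / Yfun \<nu> k \<epsilon> z) \<and>
           (\<forall>z. bpoly Q z (E0 \<nu> k \<epsilon>) \<noteq> 0 \<longrightarrow>
                (\<lambda>E. Hfun \<nu> (\<lambda>w F. bpoly P w F / bpoly Q w F) z E)
                  \<in> O[at (E0 \<nu> k \<epsilon>)](\<lambda>E. (E - E0 \<nu> k \<epsilon>) ^ 2))"
  shows "2 * \<epsilon> * \<nu> + of_nat k \<in> \<nat>"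
proof (rule ccontr)
  assume notN: "2 * \<epsilon> * \<nu> + of_nat k \<notin> \<nat>"
  obtain P Q :: "complex poly poly" where
    hQ: "\<exists>z. bpoly Q z (E0 \<nu> k \<epsilon>) \<noteq> 0" and
    hM: "\<forall>z. z \<notin> \<real>\<^sub>\<le>\<^sub>0 \<and> Yfun \<nu> k \<epsilon> z \<noteq> 0 \<and> bpoly Q z (E0 \<nu> k \<epsilon>) \<noteq> 0 \<longrightarrow>
                bpoly P z (E0 \<nu> k \<epsilon>) / bpoly Q z (E0 \<nu> k \<epsilon>)
                  = - deriv (Yfun \<nu> k \<epsilon>) z / Yfun \<nu> k \<epsilon> z" and
    hO: "\<forall>z. bpoly Q z (E0 \<nu> k \<epsilon>) \<noteq> 0 \<longrightarrow>
                (\<lambda>E. Hfun \<nu> (\<lambda>w F. bpoly P w F / bpoly Q w F) z E)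
                  \<in> O[at (E0 \<nu> k \<epsilon>)](\<lambda>E. (E - E0 \<nu> k \<epsilon>) ^ 2)"
    using assms(3) by blast
  define a where "a = 2 * \<epsilon> * \<nu> + 2 * of_nat k + 1"
  define s where "s = 2 * \<epsilon> * \<nu> + 1"
  define e0 where "e0 = E0 \<nu> k \<epsilon>"
  define c where "c = 2 / a"
  define ev where "ev = (\<lambda>R. map_poly (\<lambda>q. poly q e0) R)"
  define L where "L = Lp k s c"
  define N where "N = (ev (map_poly pderiv P) * ev Q - ev P * ev (map_poly pderiv Q)) * L * L"
  define D where "D = ev Q * ev Q"
  have a0: "a \<noteq> 0" using assms(2) by (simp add: a_def)
  have c0: "c \<noteq> 0" using a0 by (simp add: c_def)
  have sj: "\<forall>j<k. s + of_nat j \<noteq> 0"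
  proof (intro allI impI notI)
    fix j assume j: "j < k" and e: "s + of_nat j = 0"
    have "2 * \<epsilon> * \<nu> + of_nat k = of_nat (k - Suc j)"
      using e j unfolding s_def by (simp add: of_nat_diff algebra_simps)
    then show False using notN by simp
  qed
  have sn: "\<forall>n::nat. s \<noteq> of_nat (Suc n)"
  proof (intro allI notI)
    fix n assume e: "s = of_nat (Suc n)"
    have "2 * \<epsilon> * \<nu> + of_nat k = of_nat (n + k)"
      using e unfolding s_def by (simp add: algebra_simps)
    then show False using notN by simp
  qed
  have s2: "s + 2 * of_nat k \<noteq> 0" using a0 unfolding a_def s_def by (simp add: algebra_simps)
  have bq: "\<And>z. bpoly Q z e0 = poly (ev Q) z" by (simp add: ev_def bpoly_def)
  have evQ: "ev Q \<noteq> 0" using hQ unfolding e0_def[symmetric] bq by auto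
  have D0: "D \<noteq> 0" using evQ by (simp add: D_def)
  have L0: "L \<noteq> 0" by (simp add: L_def Lp_nz)
  have Yeq: "Yfun \<nu> k \<epsilon> = (\<lambda>z. z powr (\<epsilon> * \<nu> + 1 / 2) * exp (- z / a) * poly L z)"
    unfolding L_def c_def a_def s_def by (rule Yfun_eq)
  have Z0: "Zp s c L N D = 0"
  proof (rule ccontr)
    assume Zn: "Zp s c L N D \<noteq> 0"
    have fin: "finite ({x. poly (Zp s c L N D) x = 0} \<union> {x. poly L x = 0} \<union> {x. poly (ev Q) x = 0})"
      by (intro finite_UnI poly_roots_finite Zn L0 evQ)
    obtain n :: nat where n: "of_nat (Suc n) \<notin>
        {x. poly (Zp s c L N D) x = 0} \<union> {x. poly L x = 0} \<union> {x. poly (ev Q) x = 0}"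
      using exists_good_point[OF fin] ..
    define z :: complex where "z = of_nat (Suc n)"
    have zR: "z \<notin> \<real>\<^sub>\<le>\<^sub>0" unfolding z_def by (simp add: complex_nonpos_Reals_iff)
    have lz: "poly L z \<noteq> 0" and qz: "bpoly Q z e0 \<noteq> 0" and Zz: "poly (Zp s c L N D) z \<noteq> 0"
      using n unfolding z_def bq by simp_all
    have z0: "z \<noteq> 0" unfolding z_def by (simp only: of_nat_eq_0_iff)
    have Yz: "Yfun \<nu> k \<epsilon> z \<noteq> 0" unfolding Yeq using z0 lz by simp
    have hMz: "bpoly P z e0 / bpoly Q z e0 = - deriv (Yfun \<nu> k \<epsilon>) z / Yfun \<nu> k \<epsilon> z"
      using hM zR Yz qz unfolding e0_def by blast
    have hOz: "(\<lambda>E. Hfun \<nu> (\<lambda>w F. bpoly P w F / bpoly Q w F) z E) \<in> O[at e0](\<lambda>E. (E - e0)^2)"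
      using hO qz unfolding e0_def by blast
    have "poly (Zp s c L N D) z = 0"
      unfolding s_def c_def L_def N_def D_def ev_def e0_def a_def
      by (rule pointwise[where \<nu>=\<nu> and \<epsilon>=\<epsilon> and k=k and z=z and P=P and Q=Q, OF a0[unfolded a_def] zR lz[unfolded L_def c_def s_def a_def]
          qz[unfolded e0_def] hMz[unfolded e0_def] hOz[unfolded e0_def]])
    then show False using Zz by simp
  qed
  obtain G where G: "Tp s c G = pCons 0 (L * L)" using poly_sol[OF D0 Z0 sn] by blast
  have "lam s c (Tp s c G) = 0" by (rule lam_Tp[OF c0])
  moreover have "lam s c (pCons 0 (L * L)) \<noteq> 0" unfolding L_def by (rule lam_zL2_nz[OF c0 sj s2])
  ultimately show False using G by simp
qed


end
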